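(* Let $G$ be a finite graph with a proper edge-coloring, and let $\delta(G)$ denote its minimum degree. If $|V(G)|\ge 2\delta(G)$, then $G$ has a rainbow matching of size at least $\delta(G)-2(\delta(G))^{2/3}$.
   Context: An edge-coloring is proper if no two edges sharing an endpoint receive the same color (so each color class is a matching). A matching is rainbow if all of its edges have distinct colors. $\delta(G)$ is the minimum vertex degree of $G$. *)

theory Defs
  imports Complex_Main
begin

definition simple_graph :: "'a set \<Rightarrow> 'a set set \<Rightarrow> bool" where
  "simple_graph V E \<longleftrightarrow> finite V \<and> (\<forall>e\<in>E. e \<subseteq> V \<and> card e = 2)"

definition degree :: "'a set set \<Rightarrow> 'a \<Rightarrow> nat" where
  "degree E v = card {e\<in>E. v \<in> e}"

definition min_degree :: "'a set \<Rightarrow> 'a set set \<Rightarrow> nat" where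
  "min_degree V E = Min (degree E ` V)"

definition proper_edge_coloring :: "'a set set \<Rightarrow> ('a set \<Rightarrow> 'c) \<Rightarrow> bool" where
  "proper_edge_coloring E c \<longleftrightarrow>
     (\<forall>e\<in>E. \<forall>f\<in>E. e \<noteq> f \<and> e \<inter> f \<noteq> {} \<longrightarrow> c e \<noteq> c f)"

definition matching :: "'a set set \<Rightarrow> 'a set set \<Rightarrow> bool" where
  "matching E M \<longleftrightarrow> M \<subseteq> E \<and> (\<forall>e\<in>M. \<forall>f\<in>M. e \<noteq> f \<longrightarrow> e \<inter> f = {})"

definition rainbow :: "('a set \<Rightarrow> 'c) \<Rightarrow> 'a set set \<Rightarrow> bool" where
  "rainbow c M \<longleftrightarrow> inj_on c M"

end

theory Submission
  imports Defs
begin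


fun ys :: "real \<Rightarrow> real \<Rightarrow> real \<Rightarrow> nat \<Rightarrow> real" where
  "ys x0 k \<tau> 0 = x0"
| "ys x0 k \<tau> (Suc r) = ys x0 k \<tau> r - (k - \<tau> * ys x0 k \<tau> r / k)"

lemma ys_closed:
  assumes k: "k > 0" and t: "\<tau> > 0"
  shows "ys x0 k \<tau> r = k^2/\<tau> + (1 + \<tau>/k)^r * (x0 - k^2/\<tau>)"
proof (induction r)
  case 0 then show ?case by simp
next
  case (Suc r)
  have "ys x0 k \<tau> (Suc r) = ys x0 k \<tau> r * (1 + \<tau>/k) - k" by (simp add: algebra_simps)
  also have "\<dots> = (k^2/\<tau> + (1 + \<tau>/k)^r * (x0 - k^2/\<tau>)) * (1 + \<tau>/k) - k" using Suc by simp
  also have "\<dots> = k^2/\<tau> + (1 + \<tau>/k)^Suc r * (x0 - k^2/\<tau>)"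
    using k t by (simp add: field_simps power2_eq_square)
  finally show ?case .
qed

lemma ys_mono:
  fixes x y k \<tau> :: real
  assumes k: "k > 0" and t: "\<tau> \<ge> 0" and le: "x \<le> y"
  shows "x - (k - \<tau> * x / k) \<le> y - (k - \<tau> * y / k)"
proof -
  have "\<tau> * x \<le> \<tau> * y" by (rule mult_left_mono[OF le t])
  hence "\<tau> * x / k \<le> \<tau> * y / k" using k by (simp add: divide_right_mono)
  thus ?thesis using le by linarith
qed

lemma exp_bound: "4 < exp (29/20::real)"
proof -
  have "(1 + (29/20) / real (20::nat)) ^ 20 \<le> exp (29/20::real)"
    by (rule exp_ge_one_plus_x_over_n_power_n) auto
  moreover have "(4::real) < (1 + (29/20) / real (20::nat)) ^ 20"
  proof -
    have "(1 + (29/20) / real (20::nat)) = (429/400::real)" by simp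
    moreover have "(4::real) < (429 / 400) ^ 20" by (simp add: power_divide less_divide_eq)
    ultimately show ?thesis by simp
  qed
  ultimately show ?thesis by linarith
qed

lemma numeric:
  fixes m k :: nat
  assumes k3: "(real k)^3 > 8 * (real m + real k)^2"
  shows "\<exists>R\<ge>1. ys (real m) (real k) (real (3*R - 1)) R < 0"
proof -
  have kpos: "real k > 0"
  proof (rule ccontr)
    assume "\<not> real k > 0" hence "k = 0" by simp
    thus False using k3 by simp
  qed
  have k8: "real k > 8"
  proof -
    have "(real m + real k)^2 \<ge> (real k)^2" by (simp add: power_mono)
    hence "(real k)^3 > 8 * (real k)^2" using k3 by linarith
    hence "real k * (real k)^2 > 8 * (real k)^2" by (simp add: power3_eq_cube power2_eq_square algebra_simps)
    thus ?thesis using kpos by (simp add: mult_less_cancel_right)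
  qed
  show ?thesis
  proof (cases "2 * m \<le> k")
    case True
    have "ys (real m) (real k) (real (3*1 - 1)) 1 < 0"
    proof -
      have "ys (real m) (real k) (real (3*1 - 1)) 1 = real m - (real k - 2 * real m / real k)" by simp
      moreover have "2 * real m / real k \<le> 1" using True kpos by (simp add: divide_le_eq)
      moreover have "2 * real m \<le> real k" using True by linarith
      ultimately show ?thesis using k8 by linarith
    qed
    thus ?thesis by (intro exI[of _ 1]) simp
  next
    case False
    hence km: "real k < 2 * real m" by linarith
    hence mpos: "real m > 0" using kpos by linarith
    define R where "R = (k * k) div (4 * m)"
    have m0: "m > 0" using mpos by simp
    have R1: "4 * m * R \<le> k * k" unfolding R_def by (rule times_div_less_eq_dividend)
    have R2: "k * k < 4 * m * (R + 1)"
      using dividend_less_times_div[of "4 * m" "k * k"] m0 unfolding R_def by (simp add: algebra_simps)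
    have rR1: "4 * real m * real R \<le> real k * real k" using R1 by (metis of_nat_le_iff of_nat_mult of_nat_numeral)
    have rR2: "real k * real k < 4 * real m * (real R + 1)" using R2 by (metis of_nat_less_iff of_nat_mult of_nat_numeral of_nat_Suc Suc_eq_plus1 add.commute)
    define K where "K = real k * real k / (4 * real m)"
    have sq: "(real m + real k)^2 = real m * real m + 2 * (real m * real k) + real k * real k"
      by (simp add: power2_eq_square algebra_simps)
    have cb: "(real k)^3 = real k * (real k * real k)" by (simp add: power3_eq_cube)
    have k3': "real k * (real k * real k) > 8 * (real m * real m) + 16 * (real m * real k) + 8 * (real k * real k)"
      using k3 unfolding sq cb by (simp add: algebra_simps)
    have k2m: "real k * real k > 8 * real m"
    proof -
      have p1: "real m * real m \<ge> 0" "real k * real k \<ge> 0" by simp_all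
      have p2: "real m * real k > 0" using mpos kpos by simp
      have "real k * (real k * real k) > 8 * (real m * real k)" using k3' p1 p2 by linarith
      hence "real k * (real k * real k) > real k * (8 * real m)" by (simp add: algebra_simps)
      thus ?thesis using kpos by (simp add: mult_less_cancel_left)
    qed
    have K2: "K > 2" unfolding K_def using k2m mpos by (simp add: less_divide_eq)
    have RK: "real R > K - 1" unfolding K_def using rR2 mpos by (simp add: divide_less_eq algebra_simps)
    have RK': "real R \<le> K" unfolding K_def using rR1 mpos by (simp add: le_divide_eq algebra_simps)
    have R1': "real R \<ge> 1" using RK K2 by linarith
    hence Rge1: "R \<ge> 1" by simp
    have poly: "60 * real R ^ 2 - 107 * real R + 29 \<ge> 29 * real k"
    proof -
      have "60 * real R ^ 2 - 107 * real R - (60 * (K-1) ^ 2 - 107 * (K-1))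
             = (real R - (K - 1)) * (60 * (real R + K - 1) - 107)" by (simp add: algebra_simps power2_eq_square)
      moreover have "(real R - (K - 1)) * (60 * (real R + K - 1) - 107) \<ge> 0"
      proof (rule mult_nonneg_nonneg)
        show "0 \<le> real R - (K - 1)" using RK by linarith
        have "real R + K - 1 \<ge> 2" using R1' K2 by linarith
        thus "0 \<le> 60 * (real R + K - 1) - 107" by (simp add: algebra_simps)
      qed
      ultimately have f: "60 * real R ^ 2 - 107 * real R \<ge> 60 * (K-1) ^ 2 - 107 * (K-1)" by linarith
      have e1: "60 * (K-1) ^ 2 - 107 * (K-1) + 29 = 60 * K^2 - 227 * K + 196" by (simp add: algebra_simps power2_eq_square)
      have big: "15 * real k ^ 4 - 227 * real k ^ 2 * real m - 116 * real k * real m ^ 2 \<ge> 0"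
      proof -
        have "real k * (real k * (real k * real k)) \<ge> real k * (8 * (real m * real m) + 16 * (real m * real k) + 8 * (real k * real k))"
          using k3' kpos by (intro mult_left_mono) auto
        hence "real k ^ 4 \<ge> 8 * real k * real m ^ 2 + 16 * real k ^ 2 * real m + 8 * real k ^ 3"
          by (simp add: algebra_simps power2_eq_square power3_eq_cube power4_eq_xxxx)
        moreover have "real k ^ 3 \<ge> 0" using kpos by simp
        moreover have "real k * real m ^ 2 \<ge> 0" "real k ^ 2 * real m \<ge> 0" using kpos mpos by simp_all
        ultimately show ?thesis by linarith
      qed
      have "60 * K^2 - 227 * K - 29 * real k = (15 * real k ^ 4 - 227 * real k ^ 2 * real m - 116 * real k * real m ^ 2) / (4 * real m ^ 2)"
        unfolding K_def using mpos by (simp add: field_simps power2_eq_square power4_eq_xxxx)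
      hence "60 * K^2 - 227 * K - 29 * real k \<ge> 0" using big mpos by simp
      thus ?thesis using f e1 by linarith
    qed
    define e where "e = (3 * real R - 1) / real k"
    have epos: "e > 0" unfolding e_def using R1' kpos by simp
    have tau: "real (3*R - 1) = 3 * real R - 1" using Rge1 by (simp add: of_nat_diff)
    have q: "29/20 \<le> real R * (e / (1 + e))"
    proof -
      have A1: "(3 * real R - 1) * (20 * real R - 29) \<ge> 29 * real k"
        using poly by (simp add: algebra_simps power2_eq_square)
      have A2: "e * (20 * real R - 29) \<ge> 29"
      proof -
        have "e * (20 * real R - 29) = (3 * real R - 1) * (20 * real R - 29) / real k"
          unfolding e_def by simp
        also have "\<dots> \<ge> 29" using A1 kpos by (simp add: le_divide_eq)
        finally show ?thesis .
      qed
      have A3: "29 * (1 + e) \<le> 20 * (real R * e)" using A2 by (simp add: algebra_simps)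
      have "29/20 \<le> (real R * e) / (1 + e)" using A3 epos by (simp add: le_divide_eq)
      thus ?thesis by simp
    qed
    have lnq: "ln (1 + e) \<ge> e / (1 + e)" using ln_add1_ge[of e] epos by (simp add: add.commute)
    have "real R * ln (1 + e) \<ge> 29/20"
      using q mult_left_mono[OF lnq, of "real R"] R1' by linarith
    hence "exp (real R * ln (1 + e)) \<ge> exp (29/20)" by simp
    moreover have "exp (real R * ln (1 + e)) = (1 + e) ^ R"
      using epos by (simp add: exp_of_nat_mult)
    ultimately have qR: "(1 + e) ^ R > 4" using exp_bound by linarith
    define t where "t = 3 * real R - 1"
    have tpos: "t > 0" unfolding t_def using R1' by simp
    have e_t: "1 + e = 1 + t / real k" unfolding e_def t_def by simp
    have tm: "t * real m < 3 * (real k * real k) / 4"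
    proof -
      have "t * real m < 3 * real R * real m" unfolding t_def using mpos by (simp add: algebra_simps)
      also have "\<dots> \<le> 3 * (real k * real k) / 4" using rR1 by (simp add: algebra_simps)
      finally show ?thesis .
    qed
    have "ys (real m) (real k) t R = (real k)^2/t + (1 + t/real k)^R * (real m - (real k)^2/t)"
      using ys_closed[OF kpos tpos] .
    moreover have "(1 + t/real k)^R * ((real k)^2/t - real m) > (real k)^2/t"
    proof -
      have pos: "(real k)^2/t - real m > (real k)^2 / (4 * t)"
        using tm tpos by (simp add: field_simps power2_eq_square)
      have qR': "4 < (1 + t/real k)^R" using qR e_t by simp
      have "4 * ((real k)^2 / (4 * t)) < (1 + t/real k)^R * ((real k)^2/t - real m)"
        by (rule mult_strict_mono[OF qR' pos]) (use qR' tpos in auto)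
      thus ?thesis using tpos by simp
    qed
    ultimately have "ys (real m) (real k) t R < 0" by (simp add: algebra_simps)
    thus ?thesis using Rge1 tau t_def by (intro exI[of _ R]) simp
  qed
qed



locale ctx =
  fixes V :: "'a set" and E :: "'a set set" and c :: "'a set \<Rightarrow> 'c" and M :: "'a set set" and \<delta> :: nat
  assumes finV: "finite V"
    and edgesV: "\<And>e. e \<in> E \<Longrightarrow> e \<subseteq> V \<and> card e = 2"
    and proper: "proper_edge_coloring E c"
    and matM: "matching E M"
    and rbM: "rainbow c M"
    and maxM: "\<And>N. matching E N \<Longrightarrow> rainbow c N \<Longrightarrow> card N \<le> card M"
    and degV: "\<And>v. v \<in> V \<Longrightarrow> \<delta> \<le> degree E v"
begin

definition "U = V - \<Union>M"
abbreviation "m \<equiv> card M"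

lemma finE: "finite E"
proof -
  have "E \<subseteq> Pow V" using edgesV by blast
  thus ?thesis using finV by (meson finite_Pow_iff finite_subset)
qed

lemma MsubE: "M \<subseteq> E" using matM unfolding matching_def by blast
lemma finM: "finite M" using MsubE finE finite_subset by blast
lemma Mdisj: "g \<in> M \<Longrightarrow> h \<in> M \<Longrightarrow> g \<noteq> h \<Longrightarrow> g \<inter> h = {}"
  using matM unfolding matching_def by blast
lemma Mcard2: "g \<in> M \<Longrightarrow> card g = 2" using MsubE edgesV by blast
lemma cinjM: "inj_on c M" using rbM unfolding rainbow_def .
lemma finEdge: "e \<in> E \<Longrightarrow> finite e" using edgesV[of e] card.infinite by fastforce

definition emate :: "'a \<Rightarrow> 'a set" where "emate a = (THE g. g \<in> M \<and> a \<in> g)"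

lemma emate_eq: "g \<in> M \<Longrightarrow> a \<in> g \<Longrightarrow> emate a = g"
  unfolding emate_def by (rule the_equality) (use Mdisj in blast)+

lemma emate: "a \<in> \<Union>M \<Longrightarrow> emate a \<in> M \<and> a \<in> emate a"
  using emate_eq by blast

lemma proper_at: "e \<in> E \<Longrightarrow> f \<in> E \<Longrightarrow> e \<noteq> f \<Longrightarrow> x \<in> e \<Longrightarrow> x \<in> f \<Longrightarrow> c e \<noteq> c f"
  using proper unfolding proper_edge_coloring_def by blast

lemma aug:
  assumes "matching E N" "rainbow c N" "card N = m" "x \<notin> \<Union>N" "y \<notin> \<Union>N" "x \<noteq> y"
    "{x,y} \<in> E" "c {x,y} \<notin> c ` N"
  shows False
proof -
  have NE: "N \<subseteq> E" using assms(1) unfolding matching_def by blast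
  hence finN: "finite N" using finE finite_subset by blast
  have nin: "{x,y} \<notin> N" using assms(4) by blast
  have "matching E (insert {x,y} N)"
    unfolding matching_def
  proof (intro conjI ballI impI)
    show "insert {x, y} N \<subseteq> E" using NE assms(7) by blast
  next
    fix e f assume "e \<in> insert {x,y} N" "f \<in> insert {x,y} N" "e \<noteq> f"
    thus "e \<inter> f = {}" using assms(1,4,5) unfolding matching_def by blast
  qed
  moreover have "rainbow c (insert {x,y} N)"
    using assms(2,8) nin unfolding rainbow_def by auto
  ultimately have "card (insert {x,y} N) \<le> m" using maxM by blast
  moreover have "card (insert {x,y} N) = m + 1" using finN nin assms(3) by simp
  ultimately show False by simp
qed

definition col :: "'a \<times> 'a \<Rightarrow> 'c" where "col p = c {fst p, snd p}"
definition lnk :: "'a \<times> 'a \<Rightarrow> 'a set" where "lnk p = {fst p, snd p}"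
definition Es :: "('a \<times> 'a) set \<Rightarrow> 'a set set" where "Es \<sigma> = (\<lambda>p. emate (snd p)) ` \<sigma>"
definition valid :: "('a \<times> 'a) set \<Rightarrow> bool" where
  "valid \<sigma> \<longleftrightarrow> finite \<sigma> \<and> (\<forall>p\<in>\<sigma>. fst p \<in> U \<and> snd p \<in> \<Union>M \<and> lnk p \<in> E) \<and>
     inj_on fst \<sigma> \<and> inj_on (\<lambda>p. emate (snd p)) \<sigma> \<and> inj_on col \<sigma> \<and>
     (\<forall>p\<in>\<sigma>. col p \<notin> c ` (M - Es \<sigma>))"
definition sw :: "('a \<times> 'a) set \<Rightarrow> 'a set set" where "sw \<sigma> = (M - Es \<sigma>) \<union> lnk ` \<sigma>"

lemma c_lnk: "c (lnk p) = col p" unfolding lnk_def col_def by simp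

lemma U_notM: "x \<in> U \<Longrightarrow> x \<notin> \<Union>M" unfolding U_def by blast

lemma validD:
  assumes "valid \<sigma>"
  shows "finite \<sigma>" "\<And>p. p \<in> \<sigma> \<Longrightarrow> fst p \<in> U" "\<And>p. p \<in> \<sigma> \<Longrightarrow> snd p \<in> \<Union>M"
    "\<And>p. p \<in> \<sigma> \<Longrightarrow> lnk p \<in> E" "inj_on fst \<sigma>" "inj_on (\<lambda>p. emate (snd p)) \<sigma>" "inj_on col \<sigma>"
    "\<And>p. p \<in> \<sigma> \<Longrightarrow> col p \<notin> c ` (M - Es \<sigma>)"
  using assms unfolding valid_def by blast+

lemma Es_sub: assumes v: "valid \<sigma>" shows "Es \<sigma> \<subseteq> M"
proof
  fix g assume "g \<in> Es \<sigma>"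
  then obtain p where p: "p \<in> \<sigma>" "g = emate (snd p)" unfolding Es_def by blast
  show "g \<in> M" using emate[OF validD(3)[OF v p(1)]] p(2) by simp
qed

lemma card_Es: assumes v: "valid \<sigma>" shows "card (Es \<sigma>) = card \<sigma>"
  unfolding Es_def by (rule card_image[OF validD(6)[OF v]])

lemma lnk_notM: assumes v: "valid \<sigma>" and p: "p \<in> \<sigma>" shows "lnk p \<notin> M"
proof
  assume "lnk p \<in> M"
  moreover have "fst p \<in> lnk p" unfolding lnk_def by simp
  ultimately have "fst p \<in> \<Union>M" by blast
  thus False using U_notM validD(2)[OF v p] by blast
qed

lemma inj_lnk: assumes v: "valid \<sigma>" shows "inj_on lnk \<sigma>"
proof (rule inj_onI)
  fix p q assume pq: "p \<in> \<sigma>" "q \<in> \<sigma>" "lnk p = lnk q"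
  have r: "fst p \<in> U" using validD(2)[OF v pq(1)] .
  have a: "snd q \<in> \<Union>M" using validD(3)[OF v pq(2)] .
  have ne: "fst p \<noteq> snd q" using r a U_notM by metis
  have "fst p \<in> {fst q, snd q}" using pq(3) unfolding lnk_def by (metis insertI1)
  hence "fst p = fst q" using ne by blast
  thus "p = q" using inj_onD[OF validD(5)[OF v] _ pq(1) pq(2)] by blast
qed

lemma sw_sub: assumes v: "valid \<sigma>" shows "sw \<sigma> \<subseteq> E"
proof
  fix e assume "e \<in> sw \<sigma>"
  hence "e \<in> M \<or> (\<exists>p\<in>\<sigma>. e = lnk p)" unfolding sw_def by blast
  thus "e \<in> E" using MsubE validD(4)[OF v] by blast
qed

lemma sw_matching: assumes v: "valid \<sigma>" shows "matching E (sw \<sigma>)"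
  unfolding matching_def
proof (intro conjI ballI impI)
  show "sw \<sigma> \<subseteq> E" using sw_sub v .
next
  fix e f assume ef: "e \<in> sw \<sigma>" "f \<in> sw \<sigma>" "e \<noteq> f"
  have mixed: "g \<inter> lnk p = {}" if g: "g \<in> M - Es \<sigma>" and p: "p \<in> \<sigma>" for g p
  proof -
    have "fst p \<notin> g" using validD(2)[OF v p] U_notM g by blast
    moreover have "snd p \<notin> g"
    proof
      assume "snd p \<in> g"
      hence "emate (snd p) = g" using emate_eq g by blast
      thus False using g p unfolding Es_def by blast
    qed
    ultimately show ?thesis unfolding lnk_def by blast
  qed
  have both: "lnk p \<inter> lnk q = {}" if p: "p \<in> \<sigma>" and q: "q \<in> \<sigma>" and ne: "lnk p \<noteq> lnk q" for p q
  proof -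
    have pq: "p \<noteq> q" using ne by blast
    have "fst p \<noteq> fst q" using inj_onD[OF validD(5)[OF v] _ p q] pq by blast
    moreover have "snd p \<noteq> snd q"
    proof
      assume "snd p = snd q"
      hence "emate (snd p) = emate (snd q)" by simp
      hence "p = q" using inj_onD[OF validD(6)[OF v] _ p q] by simp
      thus False using pq by simp
    qed
    moreover have "fst p \<noteq> snd q"
      using validD(3)[OF v q] U_notM[OF validD(2)[OF v p]] by metis
    moreover have "fst q \<noteq> snd p"
      using validD(3)[OF v p] U_notM[OF validD(2)[OF v q]] by metis
    ultimately show ?thesis unfolding lnk_def by auto
  qed
  show "e \<inter> f = {}"
  proof (cases "e \<in> M - Es \<sigma>")
    case True
    show ?thesis
    proof (cases "f \<in> M - Es \<sigma>")
      case True
      then show ?thesis using \<open>e \<in> M - Es \<sigma>\<close> ef(3) Mdisj by blast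
    next
      case False
      then obtain q where "q \<in> \<sigma>" "f = lnk q" using ef(2) unfolding sw_def by blast
      then show ?thesis using mixed[OF True] by blast
    qed
  next
    case False
    then obtain p where p: "p \<in> \<sigma>" "e = lnk p" using ef(1) unfolding sw_def by blast
    show ?thesis
    proof (cases "f \<in> M - Es \<sigma>")
      case True
      then show ?thesis using mixed[OF True p(1)] p(2) by blast
    next
      case False
      then obtain q where "q \<in> \<sigma>" "f = lnk q" using ef(2) unfolding sw_def by blast
      then show ?thesis using both p ef(3) by blast
    qed
  qed
qed

lemma sw_rainbow: assumes v: "valid \<sigma>" shows "rainbow c (sw \<sigma>)"
  unfolding rainbow_def
proof (rule inj_onI)
  fix e f assume ef: "e \<in> sw \<sigma>" "f \<in> sw \<sigma>" "c e = c f"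
  show "e = f"
  proof (cases "e \<in> M - Es \<sigma>")
    case True
    show ?thesis
    proof (cases "f \<in> M - Es \<sigma>")
      case True
      then show ?thesis using \<open>e \<in> M - Es \<sigma>\<close> ef(3) inj_onD[OF cinjM, of e f] by blast
    next
      case False
      then obtain q where q: "q \<in> \<sigma>" "f = lnk q" using ef(2) unfolding sw_def by blast
      hence "c f = col q" using c_lnk by simp
      then show ?thesis using validD(8)[OF v q(1)] True ef(3) by (metis image_eqI)
    qed
  next
    case False
    then obtain p where p: "p \<in> \<sigma>" "e = lnk p" using ef(1) unfolding sw_def by blast
    hence cep: "c e = col p" using c_lnk by simp
    show ?thesis
    proof (cases "f \<in> M - Es \<sigma>")
      case True
      then show ?thesis using validD(8)[OF v p(1)] cep ef(3) by (metis image_eqI)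
    next
      case False
      then obtain q where q: "q \<in> \<sigma>" "f = lnk q" using ef(2) unfolding sw_def by blast
      hence "col p = col q" using cep ef(3) c_lnk by simp
      hence "p = q" using inj_onD[OF validD(7)[OF v] _ p(1) q(1)] by blast
      then show ?thesis using p q by simp
    qed
  qed
qed

lemma sw_card: assumes v: "valid \<sigma>" shows "card (sw \<sigma>) = m"
proof -
  have fs: "finite \<sigma>" using validD(1)[OF v] .
  have d: "(M - Es \<sigma>) \<inter> lnk ` \<sigma> = {}" using lnk_notM[OF v] by blast
  have le: "card \<sigma> \<le> m" using card_mono[OF finM Es_sub[OF v]] card_Es[OF v] by simp
  have "card (sw \<sigma>) = card (M - Es \<sigma>) + card (lnk ` \<sigma>)"
    unfolding sw_def using d finM fs by (simp add: card_Un_disjoint)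
  also have "card (lnk ` \<sigma>) = card \<sigma>" using card_image[OF inj_lnk[OF v]] .
  also have "card (M - Es \<sigma>) = m - card \<sigma>"
    using card_Diff_subset[OF finite_subset[OF Es_sub[OF v] finM] Es_sub[OF v]] card_Es[OF v] by simp
  also have "m - card \<sigma> + card \<sigma> = m" using le by simp
  finally show ?thesis .
qed

lemma sw_uncov1: assumes v: "valid \<sigma>" and x: "x \<in> U" "x \<notin> fst ` \<sigma>" shows "x \<notin> \<Union>(sw \<sigma>)"
proof
  assume "x \<in> \<Union>(sw \<sigma>)"
  then obtain e where e: "e \<in> sw \<sigma>" "x \<in> e" by blast
  have xM: "x \<notin> \<Union>M" using U_notM[OF x(1)] .
  show False
  proof (cases "e \<in> M - Es \<sigma>")
    case True thus False using e(2) xM by blast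
  next
    case False
    then obtain p where p: "p \<in> \<sigma>" "e = lnk p" using e(1) unfolding sw_def by blast
    have "x \<noteq> fst p" using x(2) p(1) by (metis image_eqI)
    moreover have "x \<noteq> snd p" using validD(3)[OF v p(1)] xM by metis
    ultimately show False using e(2) p(2) unfolding lnk_def by simp
  qed
qed

lemma sw_uncov2:
  assumes v: "valid \<sigma>" and p: "p \<in> \<sigma>" and x: "x \<in> emate (snd p)" "x \<noteq> snd p"
  shows "x \<notin> \<Union>(sw \<sigma>)"
proof
  assume "x \<in> \<Union>(sw \<sigma>)"
  then obtain e where e: "e \<in> sw \<sigma>" "x \<in> e" by blast
  have gM: "emate (snd p) \<in> M" using emate validD(3)[OF v p] by blast
  have xM: "x \<in> \<Union>M" using gM x by blast
  show False
  proof (cases "e \<in> M - Es \<sigma>")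
    case True
    hence "e = emate (snd p)" using Mdisj[of e "emate (snd p)"] e(2) x(1) gM by blast
    thus False using True p unfolding Es_def by blast
  next
    case False
    then obtain q where q: "q \<in> \<sigma>" "e = lnk q" using e(1) unfolding sw_def by blast
    have "x \<noteq> fst q" using validD(2)[OF v q(1)] U_notM xM by blast
    hence "x = snd q" using e(2) q(2) unfolding lnk_def by blast
    hence "emate (snd q) = emate (snd p)" using emate_eq gM x(1) by simp
    hence "q = p" using inj_onD[OF validD(6)[OF v] _ q(1) p] by blast
    thus False using \<open>x = snd q\<close> x(2) by simp
  qed
qed

lemma sw_col: "valid \<sigma> \<Longrightarrow> \<gamma> \<notin> c ` (M - Es \<sigma>) \<Longrightarrow> \<gamma> \<notin> col ` \<sigma> \<Longrightarrow> \<gamma> \<notin> c ` (sw \<sigma>)"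
  unfolding sw_def using c_lnk by auto

lemma aug_sw:
  assumes "valid \<sigma>" "x \<notin> \<Union>(sw \<sigma>)" "y \<notin> \<Union>(sw \<sigma>)" "x \<noteq> y" "{x,y} \<in> E" "c {x,y} \<notin> c ` (sw \<sigma>)"
  shows False
  using aug[OF sw_matching[OF assms(1)] sw_rainbow[OF assms(1)] sw_card[OF assms(1)] assms(2-6)] .

lemma aug_core:
  assumes v: "valid \<sigma>" and "x \<notin> \<Union>(sw \<sigma>)" "y \<notin> \<Union>(sw \<sigma>)" "x \<noteq> y" "{x,y} \<in> E"
    "c {x,y} \<notin> c ` (M - Es \<sigma>)" "c {x,y} \<notin> col ` \<sigma>"
  shows False
  using aug_sw[OF v assms(2-5) sw_col[OF v assms(6,7)]] .

lemma valid_empty: "valid {}"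
  unfolding valid_def by simp

lemma sw_empty: "sw {} = M" unfolding sw_def Es_def by simp

definition freecols :: "('a \<times> 'a) set \<Rightarrow> 'c set" where "freecols \<sigma> = col ` \<sigma> - c ` M"

lemma col_M:
  assumes v: "valid \<sigma>" and p: "p \<in> \<sigma>" and g: "g \<in> M" "col p = c g"
  shows "g \<in> Es \<sigma>"
proof (rule ccontr)
  assume "g \<notin> Es \<sigma>"
  hence "col p \<in> c ` (M - Es \<sigma>)" using g by blast
  thus False using validD(8)[OF v p] by blast
qed

lemma cM_notin_Es:
  assumes v: "valid \<sigma>" and g: "g \<in> M" "g \<notin> Es \<sigma>" shows "c g \<notin> col ` \<sigma>"
proof
  assume "c g \<in> col ` \<sigma>"
  then obtain p where "p \<in> \<sigma>" "col p = c g" by auto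
  thus False using col_M[OF v _ g(1)] g(2) by blast
qed

lemma free_notin:
  assumes "\<gamma> \<notin> c ` M" "\<gamma> \<notin> freecols \<sigma>" shows "\<gamma> \<notin> col ` \<sigma>"
  using assms unfolding freecols_def by blast

lemma cEs_notin:
  assumes v: "valid \<sigma>" and g: "g \<in> Es \<sigma>" shows "c g \<notin> c ` (M - Es \<sigma>)"
proof
  assume "c g \<in> c ` (M - Es \<sigma>)"
  then obtain h where h: "h \<in> M - Es \<sigma>" "c g = c h" by auto
  have "g \<in> M" using g Es_sub[OF v] by blast
  hence "g = h" using inj_onD[OF cinjM h(2)] h(1) by blast
  thus False using g h(1) by blast
qed

lemma inj_on_Un_disj:
  assumes "inj_on f A" "inj_on f B" "f ` A \<inter> f ` B = {}" shows "inj_on f (A \<union> B)"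
  using assms by (simp add: inj_on_Un) blast

lemma valid_union:
  assumes v1: "valid \<sigma>1" and v2: "valid \<sigma>2"
    and dr: "fst ` \<sigma>1 \<inter> fst ` \<sigma>2 = {}" and de: "Es \<sigma>1 \<inter> Es \<sigma>2 = {}"
    and dc: "freecols \<sigma>1 \<inter> freecols \<sigma>2 = {}"
  shows "valid (\<sigma>1 \<union> \<sigma>2)"
proof -
  have EsU: "Es (\<sigma>1 \<union> \<sigma>2) = Es \<sigma>1 \<union> Es \<sigma>2" unfolding Es_def by blast
  have i1: "inj_on fst (\<sigma>1 \<union> \<sigma>2)"
    by (rule inj_on_Un_disj[OF validD(5)[OF v1] validD(5)[OF v2] dr])
  have i2: "inj_on (\<lambda>p. emate (snd p)) (\<sigma>1 \<union> \<sigma>2)"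
    using inj_on_Un_disj[OF validD(6)[OF v1] validD(6)[OF v2] de[unfolded Es_def]] .
  have cd: "col ` \<sigma>1 \<inter> col ` \<sigma>2 = {}"
  proof (rule ccontr)
    assume "col ` \<sigma>1 \<inter> col ` \<sigma>2 \<noteq> {}"
    then obtain x where x: "x \<in> col ` \<sigma>1" "x \<in> col ` \<sigma>2" by blast
    from x(1) obtain p where p: "p \<in> \<sigma>1" "x = col p" by (rule imageE)
    from x(2) obtain q where q: "q \<in> \<sigma>2" "x = col q" by (rule imageE)
    have pq: "p \<in> \<sigma>1" "q \<in> \<sigma>2" "col p = col q" using p q by simp_all
    show False
    proof (cases "col p \<in> c ` M")
      case True
      then obtain g where g: "g \<in> M" "col p = c g" by blast
      have "g \<in> Es \<sigma>1" using col_M[OF v1 pq(1) g] .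
      moreover have "g \<in> Es \<sigma>2" using col_M[OF v2 pq(2) g(1)] pq(3) g(2) by simp
      ultimately show False using de by blast
    next
      case False
      have "col p \<in> col ` \<sigma>1" "col q \<in> col ` \<sigma>2" using pq(1,2) by blast+
      hence "col p \<in> freecols \<sigma>1" "col p \<in> freecols \<sigma>2"
        using False pq(3) unfolding freecols_def by simp_all
      thus False using dc by blast
    qed
  qed
  have i3: "inj_on col (\<sigma>1 \<union> \<sigma>2)"
    by (rule inj_on_Un_disj[OF validD(7)[OF v1] validD(7)[OF v2] cd])
  have cc: "\<forall>p\<in>\<sigma>1 \<union> \<sigma>2. col p \<notin> c ` (M - Es (\<sigma>1 \<union> \<sigma>2))"
  proof
    fix p assume "p \<in> \<sigma>1 \<union> \<sigma>2"
    thus "col p \<notin> c ` (M - Es (\<sigma>1 \<union> \<sigma>2))"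
    proof
      assume p: "p \<in> \<sigma>1"
      have "c ` (M - Es (\<sigma>1 \<union> \<sigma>2)) \<subseteq> c ` (M - Es \<sigma>1)" unfolding EsU by blast
      thus ?thesis using validD(8)[OF v1 p] by blast
    next
      assume p: "p \<in> \<sigma>2"
      have "c ` (M - Es (\<sigma>1 \<union> \<sigma>2)) \<subseteq> c ` (M - Es \<sigma>2)" unfolding EsU by blast
      thus ?thesis using validD(8)[OF v2 p] by blast
    qed
  qed
  have "finite (\<sigma>1 \<union> \<sigma>2)" using validD(1)[OF v1] validD(1)[OF v2] by simp
  moreover have "\<forall>p\<in>\<sigma>1 \<union> \<sigma>2. fst p \<in> U \<and> snd p \<in> \<Union>M \<and> lnk p \<in> E"
    using validD(2,3,4)[OF v1] validD(2,3,4)[OF v2] by blast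
  ultimately show ?thesis unfolding valid_def using i1 i2 i3 cc by blast
qed

lemma valid_single:
  assumes "r \<in> U" "a \<in> \<Union>M" "{r,a} \<in> E" "c {r,a} \<notin> c ` (M - {emate a})"
  shows "valid {(r,a)}"
  using assms unfolding valid_def lnk_def col_def Es_def by simp

lemma Es_single: "Es {(r,a)} = {emate a}" unfolding Es_def by simp
lemma freecols_Un: "freecols (A \<union> B) = freecols A \<union> freecols B" unfolding freecols_def by blast
lemma Es_Un: "Es (A \<union> B) = Es A \<union> Es B" unfolding Es_def by blast

definition serves :: "('a \<times> 'a) set \<Rightarrow> 'a \<Rightarrow> bool" where
  "serves \<sigma> a \<longleftrightarrow> (\<exists>r. (r,a) \<in> \<sigma>) \<and> c (emate a) \<notin> col ` \<sigma>"

definition Rob :: "'a set set \<Rightarrow> nat \<Rightarrow> nat \<Rightarrow> 'a \<Rightarrow> bool" where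
  "Rob S t L a \<longleftrightarrow> (\<forall>Zr Ze Zc. finite Zr \<longrightarrow> finite Ze \<longrightarrow> finite Zc \<longrightarrow>
      card Zr + card Ze + card Zc \<le> t \<longrightarrow> emate a \<notin> Ze \<longrightarrow>
      (\<exists>\<sigma>. valid \<sigma> \<and> serves \<sigma> a \<and> fst ` \<sigma> \<inter> Zr = {} \<and> Es \<sigma> \<inter> Ze = {} \<and>
         freecols \<sigma> \<inter> Zc = {} \<and> card \<sigma> \<le> L \<and> card (freecols \<sigma>) \<le> 1 \<and> Es \<sigma> \<subseteq> S))"

lemma RobD:
  assumes "Rob S t L a" "finite Zr" "finite Ze" "finite Zc" "card Zr + card Ze + card Zc \<le> t" "emate a \<notin> Ze"
  obtains \<sigma> where "valid \<sigma>" "serves \<sigma> a" "fst ` \<sigma> \<inter> Zr = {}" "Es \<sigma> \<inter> Ze = {}"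
         "freecols \<sigma> \<inter> Zc = {}" "card \<sigma> \<le> L" "card (freecols \<sigma>) \<le> 1" "Es \<sigma> \<subseteq> S"
proof -
  have "\<exists>\<sigma>. valid \<sigma> \<and> serves \<sigma> a \<and> fst ` \<sigma> \<inter> Zr = {} \<and> Es \<sigma> \<inter> Ze = {} \<and>
         freecols \<sigma> \<inter> Zc = {} \<and> card \<sigma> \<le> L \<and> card (freecols \<sigma>) \<le> 1 \<and> Es \<sigma> \<subseteq> S"
    using assms(1)[unfolded Rob_def, rule_format, OF assms(2-6)] .
  thus ?thesis using that by blast
qed

lemma RobE:
  assumes "Rob S t L a" "finite Zr" "finite Ze" "finite Zc" "card Zr + card Ze + card Zc \<le> t" "emate a \<notin> Ze"
  shows "\<exists>\<sigma>. valid \<sigma> \<and> serves \<sigma> a \<and> fst ` \<sigma> \<inter> Zr = {} \<and> Es \<sigma> \<inter> Ze = {} \<and>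
         freecols \<sigma> \<inter> Zc = {} \<and> card \<sigma> \<le> L \<and> card (freecols \<sigma>) \<le> 1 \<and> Es \<sigma> \<subseteq> S"
  using assms(1)[unfolded Rob_def, rule_format, OF assms(2-6)] .

lemma Rob_mono:
  assumes R: "Rob S t L a" and "S \<subseteq> S'" "t' \<le> t" "L \<le> L'" shows "Rob S' t' L' a"
  unfolding Rob_def
proof (intro allI impI)
  fix Zr :: "'a set" and Ze :: "'a set set" and Zc :: "'c set"
  assume h: "finite Zr" "finite Ze" "finite Zc"
    "card Zr + card Ze + card Zc \<le> t'" "emate a \<notin> Ze"
  have "card Zr + card Ze + card Zc \<le> t" using h(4) assms(3) by linarith
  then obtain \<sigma> where s: "valid \<sigma>" "serves \<sigma> a" "fst ` \<sigma> \<inter> Zr = {}" "Es \<sigma> \<inter> Ze = {}"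
         "freecols \<sigma> \<inter> Zc = {}" "card \<sigma> \<le> L" "card (freecols \<sigma>) \<le> 1" "Es \<sigma> \<subseteq> S"
    using RobD[OF R h(1,2,3) _ h(5)] by blast
  show "\<exists>\<sigma>. valid \<sigma> \<and> serves \<sigma> a \<and> fst ` \<sigma> \<inter> Zr = {} \<and> Es \<sigma> \<inter> Ze = {} \<and>
         freecols \<sigma> \<inter> Zc = {} \<and> card \<sigma> \<le> L' \<and> card (freecols \<sigma>) \<le> 1 \<and> Es \<sigma> \<subseteq> S'"
    using s assms(2,4) by (intro exI[of _ \<sigma>]) auto
qed

lemma serves_Es: "serves \<sigma> a \<Longrightarrow> emate a \<in> Es \<sigma>"
  unfolding serves_def Es_def by force

lemma card_fst_le: "valid \<sigma> \<Longrightarrow> card (fst ` \<sigma>) \<le> card \<sigma>"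
  using card_image_le validD(1) by blast

lemma valid_insert:
  assumes v: "valid \<sigma>" and r: "r \<in> U" "r \<notin> fst ` \<sigma>" and a: "a \<in> \<Union>M" "emate a \<notin> Es \<sigma>"
    and e: "{r,a} \<in> E" and c1: "c {r,a} \<notin> col ` \<sigma>" and c2: "c {r,a} \<notin> c ` (M - insert (emate a) (Es \<sigma>))"
  shows "valid (insert (r,a) \<sigma>)"
proof -
  have nin: "(r,a) \<notin> \<sigma>" using r(2) by force
  have EsI: "Es (insert (r,a) \<sigma>) = insert (emate a) (Es \<sigma>)" unfolding Es_def by simp
  have colra: "col (r,a) = c {r,a}" unfolding col_def by simp
  have i1: "inj_on fst (insert (r,a) \<sigma>)" using validD(5)[OF v] r(2) nin by simp
  have i2: "inj_on (\<lambda>p. emate (snd p)) (insert (r,a) \<sigma>)"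
    using validD(6)[OF v] a(2) nin unfolding Es_def by simp
  have i3: "inj_on col (insert (r,a) \<sigma>)" using validD(7)[OF v] c1 nin colra by simp
  have cc: "\<forall>p\<in>insert (r,a) \<sigma>. col p \<notin> c ` (M - Es (insert (r,a) \<sigma>))"
  proof
    fix p assume "p \<in> insert (r,a) \<sigma>"
    thus "col p \<notin> c ` (M - Es (insert (r,a) \<sigma>))"
    proof
      assume "p = (r,a)" thus ?thesis using c2 colra EsI by simp
    next
      assume p: "p \<in> \<sigma>"
      have "c ` (M - Es (insert (r,a) \<sigma>)) \<subseteq> c ` (M - Es \<sigma>)" unfolding EsI by blast
      thus ?thesis using validD(8)[OF v p] by blast
    qed
  qed
  have "\<forall>p\<in>insert (r,a) \<sigma>. fst p \<in> U \<and> snd p \<in> \<Union>M \<and> lnk p \<in> E"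
    using validD(2,3,4)[OF v] r(1) a(1) e unfolding lnk_def by auto
  thus ?thesis unfolding valid_def using validD(1)[OF v] i1 i2 i3 cc by simp
qed

lemma Es_insert: "Es (insert (r,a) \<sigma>) = insert (emate a) (Es \<sigma>)" unfolding Es_def by simp
lemma col_insert: "col ` (insert (r,a) \<sigma>) = insert (c {r,a}) (col ` \<sigma>)" unfolding col_def by simp
lemma freecols_insert_M: "c {r,a} \<in> c ` M \<Longrightarrow> freecols (insert (r,a) \<sigma>) = freecols \<sigma>"
  unfolding freecols_def col_insert by blast
lemma freecols_insert_free: "c {r,a} \<notin> c ` M \<Longrightarrow> freecols (insert (r,a) \<sigma>) = insert (c {r,a}) (freecols \<sigma>)"
  unfolding freecols_def col_insert by auto

lemma edge_ne: "{x,y} \<in> E \<Longrightarrow> x \<noteq> y"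
  using edgesV by fastforce

lemma edge_V: "{x,y} \<in> E \<Longrightarrow> y \<in> V" using edgesV by blast

lemma UM_ne: "u \<in> U \<Longrightarrow> z \<in> \<Union>M \<Longrightarrow> u \<noteq> z" using U_notM by blast

lemma serves_link: "serves \<sigma> a \<Longrightarrow> \<exists>r. (r,a) \<in> \<sigma>" unfolding serves_def by blast

lemma uncov_b:
  assumes v: "valid \<sigma>" and s: "serves \<sigma> a" and z: "z \<in> emate a" "z \<noteq> a"
  shows "z \<notin> \<Union>(sw \<sigma>)"
proof -
  obtain r where "(r,a) \<in> \<sigma>" using serves_link[OF s] by blast
  thus ?thesis using sw_uncov2[OF v, of "(r,a)"] z by simp
qed

lemma serve_color:
  assumes v: "valid \<sigma>" and s: "serves \<sigma> a"
  shows "c (emate a) \<notin> c ` (M - Es \<sigma>)" "c (emate a) \<notin> col ` \<sigma>"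
  using cEs_notin[OF v serves_Es[OF s]] s unfolding serves_def by blast+

lemma augA:
  assumes "u \<in> U" "w \<in> U" "{u,w} \<in> E" "c {u,w} \<notin> c ` M"
  shows False
proof -
  have "u \<notin> \<Union>M" "w \<notin> \<Union>M" using assms(1,2) U_notM by auto
  thus False using aug[OF matM rbM refl _ _ edge_ne[OF assms(3)] assms(3,4)] by blast
qed

lemma augB:
  assumes R: "Rob S t L a" and t: "2 \<le> t" and u: "u \<in> U" "w \<in> U" and e: "{u,w} \<in> E"
    and col: "c {u,w} = c (emate a)"
  shows False
proof -
  have "card {u,w} \<le> 2" by (cases "u = w") auto
  hence "card {u,w} + card ({}::'a set set) + card ({}::'c set) \<le> t" using t by simp
  from RobE[OF R _ _ _ this] obtain \<sigma> where s: "valid \<sigma>" "serves \<sigma> a" "fst ` \<sigma> \<inter> {u,w} = {}"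
    by auto
  have "u \<notin> \<Union>(sw \<sigma>)" "w \<notin> \<Union>(sw \<sigma>)" using sw_uncov1[OF s(1)] u s(3) by blast+
  thus False using aug_core[OF s(1) _ _ edge_ne[OF e] e] serve_color[OF s(1,2)] col by simp
qed

lemma augC:
  assumes R: "Rob S t L a" and t: "2 \<le> t" and a: "a \<in> \<Union>M" and z: "z \<in> emate a" "z \<noteq> a"
    and u: "u \<in> U" and e: "{u,z} \<in> E" and col: "c {u,z} \<notin> c ` M"
  shows False
proof -
  have "card {u} + card ({}::'a set set) + card {c {u,z}} \<le> t" using t by simp
  from RobE[OF R _ _ _ this] obtain \<sigma> where s: "valid \<sigma>" "serves \<sigma> a" "fst ` \<sigma> \<inter> {u} = {}"
      "freecols \<sigma> \<inter> {c {u,z}} = {}"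
    by auto
  have "u \<notin> \<Union>(sw \<sigma>)" using sw_uncov1[OF s(1) u] s(3) by blast
  moreover have "z \<notin> \<Union>(sw \<sigma>)" using uncov_b[OF s(1,2) z] .
  moreover have "c {u,z} \<notin> col ` \<sigma>" using free_notin[OF col] s(4) by blast
  moreover have "c {u,z} \<notin> c ` (M - Es \<sigma>)" using col by blast
  ultimately show False using aug_core[OF s(1) _ _ edge_ne[OF e] e] by blast
qed

lemma augD:
  assumes R: "Rob S t L a" and R': "Rob S t' L' a'" and t: "2 \<le> t" and t': "2 * L + 2 \<le> t'"
    and a: "a \<in> \<Union>M" "a' \<in> \<Union>M" "emate a' \<noteq> emate a" and z: "z \<in> emate a" "z \<noteq> a"
    and u: "u \<in> U" and e: "{u,z} \<in> E" and col: "c {u,z} = c (emate a')"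
  shows False
proof -
  have "card {u} + card {emate a'} + card ({}::'c set) \<le> t" using t by simp
  from RobE[OF R _ _ _ this] a(3) obtain \<sigma>1 where s1: "valid \<sigma>1" "serves \<sigma>1 a" "fst ` \<sigma>1 \<inter> {u} = {}"
      "Es \<sigma>1 \<inter> {emate a'} = {}" "card \<sigma>1 \<le> L" "card (freecols \<sigma>1) \<le> 1"
    by auto
  have f1: "finite \<sigma>1" using validD(1)[OF s1(1)] .
  have c1: "card (insert u (fst ` \<sigma>1)) \<le> L + 1"
    using card_insert_le[of "fst ` \<sigma>1" u] card_fst_le[OF s1(1)] s1(5) f1 by (simp add: card_insert_if)
  have c2: "card (Es \<sigma>1) \<le> L" using card_Es[OF s1(1)] s1(5) by simp
  have "card (insert u (fst ` \<sigma>1)) + card (Es \<sigma>1) + card (freecols \<sigma>1) \<le> t'"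
    using c1 c2 s1(6) t' by linarith
  moreover have "emate a' \<notin> Es \<sigma>1" using s1(4) by blast
  moreover have "finite (freecols \<sigma>1)" unfolding freecols_def using f1 by simp
  moreover have "finite (Es \<sigma>1)" unfolding Es_def using f1 by simp
  moreover have "finite (insert u (fst ` \<sigma>1))" using f1 by simp
  ultimately have "\<exists>\<sigma>. valid \<sigma> \<and> serves \<sigma> a' \<and> fst ` \<sigma> \<inter> insert u (fst ` \<sigma>1) = {} \<and> Es \<sigma> \<inter> Es \<sigma>1 = {} \<and>
         freecols \<sigma> \<inter> freecols \<sigma>1 = {} \<and> card \<sigma> \<le> L' \<and> card (freecols \<sigma>) \<le> 1 \<and> Es \<sigma> \<subseteq> S"
    using RobE[OF R'] by blast
  then obtain \<sigma>2 where s2: "valid \<sigma>2" "serves \<sigma>2 a'" "fst ` \<sigma>2 \<inter> insert u (fst ` \<sigma>1) = {}"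
       "Es \<sigma>2 \<inter> Es \<sigma>1 = {}" "freecols \<sigma>2 \<inter> freecols \<sigma>1 = {}"
    by (elim exE conjE) (rule that)
  have v: "valid (\<sigma>1 \<union> \<sigma>2)"
    by (rule valid_union[OF s1(1) s2(1)]) (use s2(3,4,5) in blast)+
  have "u \<notin> fst ` (\<sigma>1 \<union> \<sigma>2)" using s1(3) s2(3) by blast
  hence "u \<notin> \<Union>(sw (\<sigma>1 \<union> \<sigma>2))" using sw_uncov1[OF v u] by blast
  moreover have "z \<notin> \<Union>(sw (\<sigma>1 \<union> \<sigma>2))"
  proof -
    have "serves (\<sigma>1 \<union> \<sigma>2) a \<or> True" by simp
    obtain r where "(r,a) \<in> \<sigma>1" using serves_link[OF s1(2)] by blast
    hence "(r,a) \<in> \<sigma>1 \<union> \<sigma>2" by simp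
    thus ?thesis using sw_uncov2[OF v, of "(r,a)"] z by simp
  qed
  moreover have "c {u,z} \<notin> c ` (M - Es (\<sigma>1 \<union> \<sigma>2))"
  proof -
    have "emate a' \<in> Es (\<sigma>1 \<union> \<sigma>2)" using serves_Es[OF s2(2)] Es_Un by blast
    thus ?thesis using cEs_notin[OF v] col by simp
  qed
  moreover have "c {u,z} \<notin> col ` (\<sigma>1 \<union> \<sigma>2)"
  proof -
    have "c (emate a') \<notin> col ` \<sigma>2" using s2(2) unfolding serves_def by blast
    moreover have "c (emate a') \<notin> col ` \<sigma>1"
      using cM_notin_Es[OF s1(1) emate[OF a(2), THEN conjunct1]] s1(4) by blast
    ultimately show ?thesis using col by auto
  qed
  ultimately show False using aug_core[OF v _ _ edge_ne[OF e] e] by blast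
qed

definition hit :: "'a set set \<Rightarrow> 'a \<Rightarrow> 'a \<Rightarrow> bool" where
  "hit S u z \<longleftrightarrow> u \<in> U \<and> {u,z} \<in> E \<and> c {u,z} \<notin> c ` (M - S)"
definition H :: "'a set set \<Rightarrow> 'a \<Rightarrow> 'a set" where "H S z = {u. hit S u z}"

lemma H_sub: "H S z \<subseteq> U" unfolding H_def hit_def by blast
lemma finU: "finite U" unfolding U_def using finV by simp
lemma H_fin: "finite (H S z)" using finite_subset[OF H_sub finU] .

lemma col_inj_at: "inj_on (\<lambda>u. c {u,z}) {u. {u,z} \<in> E}"
proof (rule inj_onI)
  fix u u' assume h: "u \<in> {u. {u,z} \<in> E}" "u' \<in> {u. {u,z} \<in> E}" "c {u,z} = c {u',z}"
  show "u = u'"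
  proof (rule ccontr)
    assume ne: "u \<noteq> u'"
    have "u \<noteq> z" using edge_ne h(1) by blast
    hence "{u,z} \<noteq> {u',z}" using ne by (metis doubleton_eq_iff)
    thus False using proper_at[of "{u,z}" "{u',z}" z] h by simp
  qed
qed

lemma H_col_inj: "inj_on (\<lambda>u. c {u,z}) (H S z)"
  by (rule inj_on_subset[OF col_inj_at]) (auto simp: H_def hit_def)

lemma alive:
  assumes f: "finite Zr" "finite Ze" "finite Zc" and lt: "card Zr + card Ze + card Zc < card (H S z)"
  shows "\<exists>u\<in>H S z. u \<notin> Zr \<and> c {u,z} \<notin> Zc \<and> c {u,z} \<notin> c ` Ze"
proof (rule ccontr)
  assume "\<not> ?thesis"
  hence sub: "H S z \<subseteq> (H S z \<inter> Zr) \<union> {u\<in>H S z. c {u,z} \<in> Zc} \<union> {u\<in>H S z. c {u,z} \<in> c ` Ze}" by blast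
  have c1: "card (H S z \<inter> Zr) \<le> card Zr" using f(1) by (simp add: card_mono)
  have c2: "card {u\<in>H S z. c {u,z} \<in> Zc} \<le> card Zc"
    by (rule card_inj_on_le[OF inj_on_subset[OF H_col_inj] _ f(3)]) auto
  have c3: "card {u\<in>H S z. c {u,z} \<in> c ` Ze} \<le> card Ze"
  proof -
    have "card {u\<in>H S z. c {u,z} \<in> c ` Ze} \<le> card (c ` Ze)"
      by (rule card_inj_on_le[OF inj_on_subset[OF H_col_inj] _ finite_imageI[OF f(2)]]) auto
    also have "\<dots> \<le> card Ze" using card_image_le[OF f(2)] .
    finally show ?thesis .
  qed
  have "card (H S z) \<le> card ((H S z \<inter> Zr) \<union> {u\<in>H S z. c {u,z} \<in> Zc} \<union> {u\<in>H S z. c {u,z} \<in> c ` Ze})"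
    by (rule card_mono[OF _ sub]) (use H_fin in simp)
  also have "\<dots> \<le> card (H S z \<inter> Zr) + card {u\<in>H S z. c {u,z} \<in> Zc} + card {u\<in>H S z. c {u,z} \<in> c ` Ze}"
    by (meson card_Un_le add_le_mono1 le_trans)
  finally show False using c1 c2 c3 lt by linarith
qed

lemma hit_cases:
  assumes h: "hit (emate ` A) u z" and A: "A \<subseteq> \<Union>M"
  shows "c {u,z} \<notin> c ` M \<or> (\<exists>a\<in>A. c {u,z} = c (emate a))"
proof (cases "c {u,z} \<in> c ` M")
  case True
  then obtain g where g: "g \<in> M" "c {u,z} = c g" by blast
  have "g \<notin> M - emate ` A" using h g unfolding hit_def by blast
  hence "g \<in> emate ` A" using g(1) by blast
  thus ?thesis using g(2) by blast
qed simp

lemma emate_notS: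
  assumes A: "A \<subseteq> \<Union>M" and a: "a \<in> A" and z: "z \<in> \<Union>M" "emate z \<notin> emate ` A"
  shows "emate z \<noteq> emate a"
  using a z(2) by blast

lemma hitter_sigma:
  assumes A: "A \<subseteq> \<Union>M" and R: "\<forall>a\<in>A. Rob (emate ` A) t L a"
    and z: "z \<in> \<Union>M" "emate z \<notin> emate ` A" and h: "hit (emate ` A) u z"
    and f: "finite Zr" "finite Ze" "finite Zc" and ct: "card Zr + card Ze + card Zc + 1 \<le> t"
    and al: "u \<notin> Zr" "c {u,z} \<notin> Zc" "c {u,z} \<notin> c ` Ze" and ze: "emate z \<notin> Ze"
  shows "\<exists>\<sigma>. valid \<sigma> \<and> serves \<sigma> z \<and> fst ` \<sigma> \<inter> Zr = {} \<and> Es \<sigma> \<inter> Ze = {} \<and>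
     freecols \<sigma> \<inter> Zc = {} \<and> card \<sigma> \<le> L + 1 \<and> card (freecols \<sigma>) \<le> 1 \<and> Es \<sigma> \<subseteq> insert (emate z) (emate ` A)"
proof -
  have u: "u \<in> U" and e: "{u,z} \<in> E" using h unfolding hit_def by auto
  have ezM: "emate z \<in> M" using emate[OF z(1)] by blast
  consider (free) "c {u,z} \<notin> c ` M" | (sc) a where "a \<in> A" "c {u,z} = c (emate a)"
    using hit_cases[OF h A] by blast
  thus ?thesis
  proof cases
    case free
    let ?\<sigma> = "insert (u,z) {}"
    have v: "valid ?\<sigma>"
      by (rule valid_insert[OF valid_empty u _ z(1) _ e]) (use free in \<open>auto simp: Es_def\<close>)
    have "c (emate z) \<in> c ` M" using ezM by blast
    hence "c (emate z) \<noteq> c {u,z}" using free by metis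
    hence "serves ?\<sigma> z" unfolding serves_def col_def by auto
    moreover have "freecols ?\<sigma> = {c {u,z}}" using free unfolding freecols_def col_def by auto
    moreover have "Es ?\<sigma> = {emate z}" unfolding Es_def by simp
    ultimately show ?thesis using v al ze by (intro exI[of _ ?\<sigma>]) auto
  next
    case sc
    have aM: "a \<in> \<Union>M" using sc(1) A by blast
    have ea: "emate a \<notin> Ze" using al(3) sc(2) by blast
    have "card (insert u Zr) \<le> card Zr + 1" using f(1) by (simp add: card_insert_if)
    hence ci: "card (insert u Zr) + card Ze + card Zc \<le> t" using ct by linarith
    obtain \<sigma>a where s: "valid \<sigma>a" "serves \<sigma>a a" "fst ` \<sigma>a \<inter> insert u Zr = {}" "Es \<sigma>a \<inter> Ze = {}"
        "freecols \<sigma>a \<inter> Zc = {}" "card \<sigma>a \<le> L" "card (freecols \<sigma>a) \<le> 1" "Es \<sigma>a \<subseteq> emate ` A"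
      by (rule RobD[OF R[rule_format, OF sc(1)] finite_insert[THEN iffD2, OF f(1)] f(2,3) ci ea])
    have ezEs: "emate z \<notin> Es \<sigma>a" using s(8) z(2) by blast
    have eaEs: "emate a \<in> Es \<sigma>a" using serves_Es[OF s(2)] .
    have c1: "c {u,z} \<notin> col ` \<sigma>a" using s(2) sc(2) unfolding serves_def by simp
    have sub: "c ` (M - insert (emate z) (Es \<sigma>a)) \<subseteq> c ` (M - Es \<sigma>a)" by blast
    have c2: "c {u,z} \<notin> c ` (M - insert (emate z) (Es \<sigma>a))"
      using cEs_notin[OF s(1) eaEs] sc(2) sub by (metis subsetD)
    let ?\<sigma> = "insert (u,z) \<sigma>a"
    have v: "valid ?\<sigma>" by (rule valid_insert[OF s(1) u _ z(1) ezEs e c1 c2]) (use s(3) in blast)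
    have cM: "c {u,z} \<in> c ` M" using sc(2) emate[OF aM] by auto
    have fr: "freecols ?\<sigma> = freecols \<sigma>a" using freecols_insert_M[OF cM] .
    have "c (emate z) \<noteq> c {u,z}"
    proof
      assume "c (emate z) = c {u,z}"
      hence "c (emate z) = c (emate a)" using sc(2) by simp
      hence "emate z = emate a" using inj_onD[OF cinjM] ezM emate[OF aM] by blast
      thus False using ezEs eaEs by simp
    qed
    hence "serves ?\<sigma> z" unfolding serves_def col_insert using cM_notin_Es[OF s(1) ezM ezEs] by auto
    moreover have "card ?\<sigma> \<le> L + 1" using card_insert_le[of \<sigma>a "(u,z)"] s(6) validD(1)[OF s(1)]
      by (simp add: card_insert_if)
    moreover have "Es ?\<sigma> = insert (emate z) (Es \<sigma>a)" using Es_insert .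
    ultimately show ?thesis using v s al ze fr by (intro exI[of _ ?\<sigma>]) auto
  qed
qed

lemma Rob_new:
  assumes A: "A \<subseteq> \<Union>M" and R: "\<forall>a\<in>A. Rob (emate ` A) t L a"
    and z: "z \<in> \<Union>M" "emate z \<notin> emate ` A" and tt: "t' + 1 \<le> t" and hc: "t' < card (H (emate ` A) z)"
  shows "Rob (insert (emate z) (emate ` A)) t' (L + 1) z"
  unfolding Rob_def
proof (intro allI impI)
  fix Zr :: "'a set" and Ze :: "'a set set" and Zc :: "'c set"
  assume f: "finite Zr" "finite Ze" "finite Zc" and ct: "card Zr + card Ze + card Zc \<le> t'" and ze: "emate z \<notin> Ze"
  obtain u where u: "u \<in> H (emate ` A) z" "u \<notin> Zr" "c {u,z} \<notin> Zc" "c {u,z} \<notin> c ` Ze"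
    using alive[OF f] ct hc by (meson le_less_trans)
  have h: "hit (emate ` A) u z" using u(1) unfolding H_def by simp
  show "\<exists>\<sigma>. valid \<sigma> \<and> serves \<sigma> z \<and> fst ` \<sigma> \<inter> Zr = {} \<and> Es \<sigma> \<inter> Ze = {} \<and>
     freecols \<sigma> \<inter> Zc = {} \<and> card \<sigma> \<le> L + 1 \<and> card (freecols \<sigma>) \<le> 1 \<and> Es \<sigma> \<subseteq> insert (emate z) (emate ` A)"
    by (rule hitter_sigma[OF A R z h f _ u(2,3,4) ze]) (use ct tt in linarith)
qed

lemma augE:
  assumes A: "A \<subseteq> \<Union>M" and R: "\<forall>a\<in>A. Rob (emate ` A) t L a" and t: "2 * L + 3 \<le> t"
    and z: "z \<in> \<Union>M" "emate z \<notin> emate ` A" and z': "z' \<in> emate z" "z' \<noteq> z"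
    and hc: "2 * L + 3 \<le> card (H (emate ` A) z)" and h': "hit (emate ` A) u' z'"
  shows False
proof -
  have u': "u' \<in> U" and e': "{u',z'} \<in> E" using h' unfolding hit_def by auto
  have z'M: "z' \<in> \<Union>M" using z'(1) emate[OF z(1)] by blast
  have ez': "emate z' = emate z" using emate_eq[OF _ z'(1)] emate[OF z(1)] by blast
  have h'': "hit (emate ` A) u' z'" using h' .
  consider (free) "c {u',z'} \<notin> c ` M" | (sc) a' where "a' \<in> A" "c {u',z'} = c (emate a')"
    using hit_cases[OF h' A] by blast
  thus False
  proof cases
    case free
    have "card {u'} + card ({}::'a set set) + card {c {u',z'}} < card (H (emate ` A) z)" using hc by simp
    then obtain u where u: "u \<in> H (emate ` A) z" "u \<notin> {u'}" "c {u,z} \<notin> {c {u',z'}}" "c {u,z} \<notin> c ` {}"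
      using alive[of "{u'}" "{}" "{c {u',z'}}"] by auto
    have h: "hit (emate ` A) u z" using u(1) unfolding H_def by simp
    have "\<exists>\<sigma>. valid \<sigma> \<and> serves \<sigma> z \<and> fst ` \<sigma> \<inter> {u'} = {} \<and> Es \<sigma> \<inter> {} = {} \<and>
     freecols \<sigma> \<inter> {c {u',z'}} = {} \<and> card \<sigma> \<le> L + 1 \<and> card (freecols \<sigma>) \<le> 1 \<and> Es \<sigma> \<subseteq> insert (emate z) (emate ` A)"
      by (rule hitter_sigma[OF A R z h finite.insertI[OF finite.emptyI] finite.emptyI finite.insertI[OF finite.emptyI] _ u(2,3,4)])
         (use t in simp_all)
    then obtain \<sigma> where s: "valid \<sigma>" "serves \<sigma> z" "fst ` \<sigma> \<inter> {u'} = {}" "freecols \<sigma> \<inter> {c {u',z'}} = {}"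
      by (elim exE conjE) (rule that)
    have "u' \<notin> \<Union>(sw \<sigma>)" using sw_uncov1[OF s(1) u'] s(3) by blast
    moreover have "z' \<notin> \<Union>(sw \<sigma>)" using uncov_b[OF s(1,2) z'] .
    moreover have "c {u',z'} \<notin> col ` \<sigma>" using free_notin[OF free] s(4) by blast
    moreover have "c {u',z'} \<notin> c ` (M - Es \<sigma>)" using free by blast
    ultimately show False using aug_core[OF s(1) _ _ edge_ne[OF e'] e'] by blast
  next
    case sc
    have a'M: "a' \<in> \<Union>M" using sc(1) A by blast
    have c0: "card {u'} + card ({}::'a set set) + card ({}::'c set) \<le> t" using t by simp
    obtain \<sigma>2 where s2: "valid \<sigma>2" "serves \<sigma>2 a'" "fst ` \<sigma>2 \<inter> {u'} = {}" "Es \<sigma>2 \<inter> {} = {}"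
        "freecols \<sigma>2 \<inter> {} = {}" "card \<sigma>2 \<le> L" "card (freecols \<sigma>2) \<le> 1" "Es \<sigma>2 \<subseteq> emate ` A"
      by (rule RobD[OF R[rule_format, OF sc(1)] _ _ _ c0]) auto
    have f2: "finite \<sigma>2" using validD(1)[OF s2(1)] .
    let ?Zr = "insert u' (fst ` \<sigma>2)" and ?Ze = "Es \<sigma>2" and ?Zc = "freecols \<sigma>2"
    have fz: "finite ?Zr" "finite ?Ze" "finite ?Zc" using f2 unfolding Es_def freecols_def by auto
    have cr: "card ?Zr \<le> L + 1"
    proof -
      have "card ?Zr \<le> card (fst ` \<sigma>2) + 1" using f2 by (simp add: card_insert_if)
      thus ?thesis using card_fst_le[OF s2(1)] s2(6) by linarith
    qed
    have ce: "card ?Ze \<le> L" using card_Es[OF s2(1)] s2(6) by simp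
    have csum: "card ?Zr + card ?Ze + card ?Zc < card (H (emate ` A) z)" using cr ce s2(7) hc by linarith
    obtain u where u: "u \<in> H (emate ` A) z" "u \<notin> ?Zr" "c {u,z} \<notin> ?Zc" "c {u,z} \<notin> c ` ?Ze"
      using alive[OF fz csum] by blast
    have h: "hit (emate ` A) u z" using u(1) unfolding H_def by simp
    have ze: "emate z \<notin> ?Ze" using s2(8) z(2) by blast
    have "\<exists>\<sigma>. valid \<sigma> \<and> serves \<sigma> z \<and> fst ` \<sigma> \<inter> ?Zr = {} \<and> Es \<sigma> \<inter> ?Ze = {} \<and>
     freecols \<sigma> \<inter> ?Zc = {} \<and> card \<sigma> \<le> L + 1 \<and> card (freecols \<sigma>) \<le> 1 \<and> Es \<sigma> \<subseteq> insert (emate z) (emate ` A)"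
      by (rule hitter_sigma[OF A R z h fz _ u(2,3,4) ze]) (use cr ce s2(7) t in linarith)
    then obtain \<sigma>1 where s1: "valid \<sigma>1" "serves \<sigma>1 z" "fst ` \<sigma>1 \<inter> ?Zr = {}" "Es \<sigma>1 \<inter> ?Ze = {}"
        "freecols \<sigma>1 \<inter> ?Zc = {}"
      by (elim exE conjE) (rule that)
    have v: "valid (\<sigma>1 \<union> \<sigma>2)" by (rule valid_union[OF s1(1) s2(1)]) (use s1(3,4,5) in blast)+
    have "u' \<notin> fst ` (\<sigma>1 \<union> \<sigma>2)" using s1(3) s2(3) by blast
    hence "u' \<notin> \<Union>(sw (\<sigma>1 \<union> \<sigma>2))" using sw_uncov1[OF v u'] by blast
    moreover have "z' \<notin> \<Union>(sw (\<sigma>1 \<union> \<sigma>2))"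
    proof -
      obtain r where "(r,z) \<in> \<sigma>1" using serves_link[OF s1(2)] by blast
      hence "(r,z) \<in> \<sigma>1 \<union> \<sigma>2" by simp
      thus ?thesis using sw_uncov2[OF v, of "(r,z)"] z' by simp
    qed
    moreover have "c {u',z'} \<notin> c ` (M - Es (\<sigma>1 \<union> \<sigma>2))"
    proof -
      have "emate a' \<in> Es (\<sigma>1 \<union> \<sigma>2)" using serves_Es[OF s2(2)] Es_Un by blast
      thus ?thesis using cEs_notin[OF v] sc(2) by simp
    qed
    moreover have "c {u',z'} \<notin> col ` (\<sigma>1 \<union> \<sigma>2)"
    proof -
      have "c (emate a') \<notin> col ` \<sigma>2" using s2(2) unfolding serves_def by blast
      moreover have "emate a' \<notin> Es \<sigma>1" using s1(4) serves_Es[OF s2(2)] by blast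
      hence "c (emate a') \<notin> col ` \<sigma>1"
        using cM_notin_Es[OF s1(1) emate[OF a'M, THEN conjunct1]] by blast
      ultimately show ?thesis using sc(2) by auto
    qed
    ultimately show False using aug_core[OF v _ _ edge_ne[OF e'] e'] by blast
  qed
qed

lemma good_sub:
  assumes A: "A \<subseteq> \<Union>M" and R: "\<forall>a\<in>A. Rob (emate ` A) t L a" and t: "2 * L + 2 \<le> t" "2 \<le> t"
    and h: "hit (emate ` A) u z"
  shows "z \<in> \<Union>(M - emate ` A) \<or> z \<in> A"
proof -
  have u: "u \<in> U" and e: "{u,z} \<in> E" using h unfolding hit_def by auto
  have zV: "z \<in> V" using edge_V[OF e] .
  show ?thesis
  proof (cases "z \<in> U")
    case True
    have "False"
    proof -
      consider (free) "c {u,z} \<notin> c ` M" | (sc) a where "a \<in> A" "c {u,z} = c (emate a)"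
        using hit_cases[OF h A] by blast
      thus False
      proof cases
        case free thus False using augA[OF u True e] by blast
      next
        case sc thus False using augB[OF R[rule_format, OF sc(1)] t(2) u True e] by simp
      qed
    qed
    thus ?thesis ..
  next
    case False
    hence zM: "z \<in> \<Union>M" using zV unfolding U_def by blast
    show ?thesis
    proof (cases "emate z \<in> emate ` A")
      case False
      hence "emate z \<in> M - emate ` A" using emate[OF zM] by blast
      thus ?thesis using emate[OF zM] by blast
    next
      case True
      then obtain a where a: "a \<in> A" "emate z = emate a" by blast
      have aM: "a \<in> \<Union>M" using a(1) A by blast
      show ?thesis
      proof (cases "z = a")
        case True thus ?thesis using a(1) by blast
      next
        case False
        have za: "z \<in> emate a" using emate[OF zM] a(2) by simp
        have "False"
        proof -
          consider (free) "c {u,z} \<notin> c ` M" | (sc) a' where "a' \<in> A" "c {u,z} = c (emate a')"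
            using hit_cases[OF h A] by blast
          thus False
          proof cases
            case free thus False using augC[OF R[rule_format, OF a(1)] t(2) aM za False u e] by blast
          next
            case sc
            show False
            proof (cases "emate a' = emate a")
              case True
              have "emate a \<in> E" using emate[OF aM] MsubE by blast
              moreover have "{u,z} \<noteq> emate a" using U_notM[OF u] emate[OF aM] by blast
              ultimately have "c {u,z} \<noteq> c (emate a)" using proper_at[OF e _ _ _ za] by blast
              thus False using sc(2) True by simp
            next
              case ne: False
              have a'M: "a' \<in> \<Union>M" using sc(1) A by blast
              show False using augD[OF R[rule_format, OF a(1)] R[rule_format, OF sc(1)] t(2) t(1) aM a'M ne za False u e sc(2)] .
            qed
          qed
        qed
        thus ?thesis ..
      qed
    qed
  qed
qed

lemma deg_nb:
  assumes u: "u \<in> V" shows "degree E u = card {z. {u,z} \<in> E}"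
proof -
  have eq: "{e\<in>E. u \<in> e} = (\<lambda>z. {u,z}) ` {z. {u,z} \<in> E}"
  proof
    show "{e\<in>E. u \<in> e} \<subseteq> (\<lambda>z. {u,z}) ` {z. {u,z} \<in> E}"
    proof
      fix e assume e: "e \<in> {e\<in>E. u \<in> e}"
      have "card e = 2" using edgesV e by blast
      then obtain x y where xy: "e = {x,y}" "x \<noteq> y" by (meson card_2_iff)
      show "e \<in> (\<lambda>z. {u,z}) ` {z. {u,z} \<in> E}"
      proof (cases "u = x")
        case True thus ?thesis using e xy by blast
      next
        case False hence "u = y" using e xy by blast
        hence "e = {u,x}" using xy by blast
        thus ?thesis using e by blast
      qed
    qed
  next
    show "(\<lambda>z. {u,z}) ` {z. {u,z} \<in> E} \<subseteq> {e\<in>E. u \<in> e}" by auto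
  qed
  have inj: "inj_on (\<lambda>z. {u,z}) {z. {u,z} \<in> E}"
  proof (rule inj_onI)
    fix z z' assume h: "z \<in> {z. {u,z} \<in> E}" "z' \<in> {z. {u,z} \<in> E}" "{u,z} = {u,z'}"
    have "u \<noteq> z" "u \<noteq> z'" using edge_ne h(1,2) by auto
    thus "z = z'" using h(3) by (metis doubleton_eq_iff)
  qed
  show ?thesis unfolding degree_def eq using card_image[OF inj] .
qed

lemma col_inj_at2: "inj_on (\<lambda>z. c {u,z}) {z. {u,z} \<in> E}"
proof (rule inj_onI)
  fix z z' assume h: "z \<in> {z. {u,z} \<in> E}" "z' \<in> {z. {u,z} \<in> E}" "c {u,z} = c {u,z'}"
  show "z = z'"
  proof (rule ccontr)
    assume ne: "z \<noteq> z'"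
    have "u \<noteq> z" using edge_ne h(1) by blast
    hence "{u,z} \<noteq> {u,z'}" using ne by (metis doubleton_eq_iff)
    thus False using proper_at[of "{u,z}" "{u,z'}" u] h by simp
  qed
qed

lemma card_MS:
  assumes A: "finite A" "A \<subseteq> \<Union>M" "inj_on emate A"
  shows "card (M - emate ` A) + card A = m"
proof -
  have sub: "emate ` A \<subseteq> M" using A(2) emate by blast
  have "card (emate ` A) = card A" using card_image[OF A(3)] .
  moreover have "card (M - emate ` A) = m - card (emate ` A)" using card_Diff_subset[OF _ sub] A(1) by simp
  moreover have "card (emate ` A) \<le> m" using card_mono[OF finM sub] .
  ultimately show ?thesis by simp
qed

lemma land_count:
  assumes A: "finite A" "A \<subseteq> \<Union>M" "inj_on emate A" and R: "\<forall>a\<in>A. Rob (emate ` A) t L a"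
    and t: "2 * L + 2 \<le> t" "2 \<le> t" and u: "u \<in> U"
  shows "\<delta> \<le> m + card {z\<in>\<Union>(M - emate ` A). hit (emate ` A) u z}"
proof -
  let ?S = "emate ` A"
  let ?Nb = "{z. {u,z} \<in> E}"
  let ?Good = "{z. hit ?S u z}" and ?Bad = "{z\<in>?Nb. c {u,z} \<in> c ` (M - ?S)}"
  let ?Land = "{z\<in>\<Union>(M - ?S). hit ?S u z}"
  have uV: "u \<in> V" using u unfolding U_def by blast
  have "?Nb \<subseteq> V" using edge_V by blast
  hence finNb: "finite ?Nb" using finite_subset finV by blast
  have d: "\<delta> \<le> card ?Nb" using degV[OF uV] deg_nb[OF uV] by simp
  have sub: "?Nb \<subseteq> ?Good \<union> ?Bad"
  proof
    fix z assume "z \<in> ?Nb" thus "z \<in> ?Good \<union> ?Bad" using u unfolding hit_def by auto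
  qed
  have sub2: "?Good \<union> ?Bad \<subseteq> ?Nb" unfolding hit_def by auto
  have "card ?Nb \<le> card (?Good \<union> ?Bad)" using card_mono[OF finite_subset[OF sub2 finNb] sub] .
  hence c1: "card ?Nb \<le> card ?Good + card ?Bad" using card_Un_le[of ?Good ?Bad] by linarith
  have c2: "card ?Bad \<le> card (M - ?S)"
  proof -
    have "card ?Bad \<le> card (c ` (M - ?S))"
      by (rule card_inj_on_le[OF inj_on_subset[OF col_inj_at2]]) (use finM in auto)
    also have "\<dots> \<le> card (M - ?S)" using card_image_le finM by blast
    finally show ?thesis .
  qed
  have gs: "?Good \<subseteq> ?Land \<union> A" using good_sub[OF A(2) R t] by blast
  have "?Land \<subseteq> ?Nb" unfolding hit_def by auto
  hence finL: "finite ?Land" using finite_subset finNb by blast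
  have c3: "card ?Good \<le> card ?Land + card A"
    using card_mono[OF _ gs] card_Un_le[of ?Land A] finL A(1) by (meson finite_Un le_trans)
  show ?thesis using d c1 c2 c3 card_MS[OF A] by linarith
qed

lemma dcount:
  assumes "finite X" "finite Y"
  shows "(\<Sum>x\<in>X. card {y\<in>Y. P x y}) = (\<Sum>y\<in>Y. card {x\<in>X. P x y})"
proof -
  have a: "card {y\<in>Y. P x y} = (\<Sum>y\<in>Y. if P x y then 1 else 0)" for x
    using sum.inter_filter[OF assms(2), of "\<lambda>_. 1::nat" "P x"] by simp
  have b: "card {x\<in>X. P x y} = (\<Sum>x\<in>X. if P x y then 1 else 0)" for y
    using sum.inter_filter[OF assms(1), of "\<lambda>_. 1::nat" "\<lambda>x. P x y"] by simp
  show ?thesis unfolding a b by (rule sum.swap)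
qed

lemma real_step:
  fixes k p x Uc \<tau> :: real
  assumes k: "0 < k" and U: "2 * k \<le> Uc" and x: "0 \<le> x" and tau: "0 \<le> \<tau>"
    and main: "k * Uc \<le> p * Uc + 2 * x * \<tau>"
  shows "k - \<tau> * x / k \<le> p"
proof (cases "k \<le> p")
  case True
  have "\<tau> * x / k \<ge> 0" using k x tau by simp
  thus ?thesis using True by linarith
next
  case False
  have "(k - p) * (2 * k) \<le> (k - p) * Uc" by (rule mult_left_mono) (use U False in auto)
  hence "(k - p) * k \<le> x * \<tau>" using main by (simp add: algebra_simps)
  hence "k * k - x * \<tau> \<le> p * k" by (simp add: algebra_simps)
  hence "(k * k - x * \<tau>) / k \<le> p" using k by (simp add: divide_le_eq)
  moreover have "(k * k - x * \<tau>) / k = k - \<tau> * x / k" using k by (simp add: field_simps)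
  ultimately show ?thesis by simp
qed

lemma card_W:
  "card (\<Union>(M - S)) \<le> 2 * card (M - S)"
proof -
  have "card (\<Union>(M - S)) \<le> sum card (M - S)" by (rule card_Union_le_sum_card)
  also have "sum card (M - S) = sum (\<lambda>_. 2) (M - S)" by (rule sum.cong) (auto simp: Mcard2)
  finally show ?thesis by simp
qed

lemma finW: "finite (\<Union>(M - S))"
proof -
  have "\<Union>(M - S) \<subseteq> V" using MsubE edgesV by blast
  thus ?thesis using finite_subset finV by blast
qed

lemma step:
  assumes A: "finite A" "A \<subseteq> \<Union>M" "inj_on emate A" and R: "\<forall>a\<in>A. Rob (emate ` A) (T - r) r a"
    and T: "3 * r + 3 \<le> T" and k: "m < \<delta>" and Uc: "2 * (\<delta> - m) \<le> card U"
  shows "\<exists>A'. finite A' \<and> A' \<subseteq> \<Union>M \<and> inj_on emate A' \<and> (\<forall>a\<in>A'. Rob (emate ` A') (T - Suc r) (Suc r) a) \<and>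
     real (card (M - emate ` A')) \<le> real (card (M - emate ` A)) -
        (real (\<delta> - m) - real (T - 1) * real (card (M - emate ` A)) / real (\<delta> - m))"
proof -
  let ?S = "emate ` A"
  let ?W = "\<Union>(M - ?S)"
  let ?P = "{z\<in>?W. T \<le> card (H ?S z)}"
  let ?x = "card (M - ?S)"
  have t1: "2 * r + 2 \<le> T - r" "2 \<le> T - r" "2 * r + 3 \<le> T - r" using T by auto
  have fW: "finite ?W" using finW .
  have WM: "?W \<subseteq> \<Union>M" by blast
  have zW: "emate z \<notin> ?S" "z \<in> \<Union>M" if zin: "z \<in> ?W" for z
  proof -
    obtain g where g: "g \<in> M - ?S" "z \<in> g" using zin by blast
    thus "emate z \<notin> ?S" using emate_eq[of g z] by auto
    show "z \<in> \<Union>M" using g by blast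
  qed
  have land: "\<delta> - m \<le> card {z\<in>?W. hit ?S u z}" if "u \<in> U" for u
    using land_count[OF A R t1(1,2) that] by linarith
  have HU: "{u\<in>U. hit ?S u z} = H ?S z" for z unfolding H_def hit_def by blast
  have sumeq: "(\<Sum>u\<in>U. card {z\<in>?W. hit ?S u z}) = (\<Sum>z\<in>?W. card (H ?S z))"
    using dcount[OF finU fW, of "hit ?S"] HU by simp
  have lower: "card U * (\<delta> - m) \<le> (\<Sum>u\<in>U. card {z\<in>?W. hit ?S u z})"
  proof -
    have "(\<Sum>u\<in>U. \<delta> - m) \<le> (\<Sum>u\<in>U. card {z\<in>?W. hit ?S u z})" by (rule sum_mono) (use land in blast)
    thus ?thesis by simp
  qed
  have pt: "card (H ?S z) \<le> (if z \<in> ?P then card U else 0) + (T - 1)" if "z \<in> ?W" for z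
  proof (cases "z \<in> ?P")
    case True
    have "card (H ?S z) \<le> card U" using card_mono[OF finU H_sub] .
    thus ?thesis using True by simp
  next
    case False
    have "\<not> T \<le> card (H ?S z)" using False that by blast
    thus ?thesis using False by simp
  qed
  have upper: "(\<Sum>z\<in>?W. card (H ?S z)) \<le> card ?P * card U + card ?W * (T - 1)"
  proof -
    have "(\<Sum>z\<in>?W. card (H ?S z)) \<le> (\<Sum>z\<in>?W. (if z \<in> ?P then card U else 0) + (T - 1))"
      by (rule sum_mono) (use pt in blast)
    also have "\<dots> = (\<Sum>z\<in>?W. (if z \<in> ?P then card U else 0)) + card ?W * (T - 1)"
      by (simp add: sum.distrib)
    also have "(\<Sum>z\<in>?W. (if z \<in> ?P then card U else 0)) = card ?P * card U"
    proof -
      have "(\<Sum>z\<in>?W. (if z \<in> ?P then card U else 0)) = (\<Sum>z\<in>?W. (if T \<le> card (H ?S z) then card U else 0))"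
        by (rule sum.cong) auto
      also have "\<dots> = (\<Sum>z\<in>?P. card U)" using sum.inter_filter[OF fW, of "\<lambda>_. card U" "\<lambda>z. T \<le> card (H ?S z)"] by simp
      also have "\<dots> = card ?P * card U" by simp
      finally show ?thesis .
    qed
    finally show ?thesis .
  qed
  have cW: "card ?W \<le> 2 * ?x" using card_W .
  have main_nat: "card U * (\<delta> - m) \<le> card ?P * card U + 2 * ?x * (T - 1)"
  proof -
    have "card ?W * (T - 1) \<le> 2 * ?x * (T - 1)" using cW by (rule mult_right_mono) simp
    thus ?thesis using lower sumeq upper by linarith
  qed
  have Pbound: "real (\<delta> - m) - real (T - 1) * real ?x / real (\<delta> - m) \<le> real (card ?P)"
  proof (rule real_step)
    show "0 < real (\<delta> - m)" using k by simp
    show "2 * real (\<delta> - m) \<le> real (card U)" using Uc by linarith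
    show "real (\<delta> - m) * real (card U) \<le> real (card ?P) * real (card U) + 2 * real ?x * real (T - 1)"
      using main_nat by (simp add: algebra_simps of_nat_mult[symmetric] del: of_nat_mult)
  qed simp_all
  have injP: "inj_on emate ?P"
  proof (rule inj_onI)
    fix z z' assume zz: "z \<in> ?P" "z' \<in> ?P" "emate z = emate z'"
    show "z = z'"
    proof (rule ccontr)
      assume ne: "z \<noteq> z'"
      have zM: "z \<in> \<Union>M" "emate z \<notin> ?S" using zW zz(1) by auto
      have z'in: "z' \<in> emate z" using zz(3) emate[OF zW(2)[of z']] zz(2) by auto
      have "H ?S z' \<noteq> {}" using zz(2) T by auto
      then obtain u' where "hit ?S u' z'" unfolding H_def by blast
      moreover have "2 * r + 3 \<le> card (H ?S z)" using zz(1) T by auto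
      ultimately show False using augE[OF A(2) R t1(3) zM z'in _] ne by blast
    qed
  qed
  have PW: "?P \<subseteq> ?W" by blast
  have eP: "emate ` ?P \<subseteq> M - ?S"
  proof
    fix g assume "g \<in> emate ` ?P"
    then obtain z where z: "z \<in> ?P" "g = emate z" by blast
    have "z \<in> ?W" using z(1) by blast
    thus "g \<in> M - ?S" using zW[of z] emate[of z] z(2) by blast
  qed
  let ?A' = "A \<union> ?P"
  have fP: "finite ?P" using finite_subset[OF PW fW] .
  have A'1: "finite ?A'" using A(1) fP by simp
  have A'2: "?A' \<subseteq> \<Union>M" using A(2) PW by blast
  have A'3: "inj_on emate ?A'"
    by (rule inj_on_Un_disj[OF A(3) injP]) (use eP in blast)
  have SA': "emate ` ?A' = ?S \<union> emate ` ?P" by blast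
  have RA': "\<forall>a\<in>?A'. Rob (emate ` ?A') (T - Suc r) (Suc r) a"
  proof
    fix a assume "a \<in> ?A'"
    thus "Rob (emate ` ?A') (T - Suc r) (Suc r) a"
    proof
      assume a: "a \<in> A"
      show ?thesis by (rule Rob_mono[OF R[rule_format, OF a]]) (use SA' in auto)
    next
      assume a: "a \<in> ?P"
      have hc: "T - Suc r < card (H ?S a)" using a T by auto
      have "Rob (insert (emate a) ?S) (T - Suc r) (r + 1) a"
        by (rule Rob_new[OF A(2) R zW(2)[of a] zW(1)[of a] _ hc]) (use a T in auto)
      thus ?thesis by (rule Rob_mono) (use a in auto)
    qed
  qed
  have cardA': "card (M - emate ` ?A') = ?x - card ?P"
  proof -
    have "M - emate ` ?A' = (M - ?S) - emate ` ?P" using SA' by blast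
    hence "card (M - emate ` ?A') = ?x - card (emate ` ?P)"
      using card_Diff_subset[OF finite_imageI[OF fP] eP] by simp
    also have "card (emate ` ?P) = card ?P" using card_image[OF injP] .
    finally show ?thesis .
  qed
  have Ple: "card ?P \<le> ?x" using card_mono[OF _ eP] card_image[OF injP] finM by simp
  have eq1: "real (card (M - emate ` ?A')) = real ?x - real (card ?P)" using cardA' Ple by simp
  have "real ?x - real (card ?P) \<le> real ?x - (real (\<delta> - m) - real (T - 1) * real ?x / real (\<delta> - m))"
    using Pbound by (rule diff_left_mono)
  hence "real (card (M - emate ` ?A')) \<le> real ?x - (real (\<delta> - m) - real (T - 1) * real ?x / real (\<delta> - m))"
    unfolding eq1 .
  thus ?thesis using A'1 A'2 A'3 RA' by blast
qed


lemma cardUM: "card (\<Union>M) = 2 * m"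
proof -
  have "card (\<Union>M) = sum card M"
    by (rule card_Union_disjoint) (use Mdisj finEdge MsubE in \<open>auto simp: pairwise_def disjnt_def\<close>)
  also have "\<dots> = sum (\<lambda>_. 2) M" by (rule sum.cong) (auto simp: Mcard2)
  finally show ?thesis by simp
qed

lemma cardU: "card U = card V - 2 * m"
proof -
  have "\<Union>M \<subseteq> V" using MsubE edgesV by blast
  thus ?thesis unfolding U_def using card_Diff_subset[OF finite_subset[OF _ finV]] cardUM by simp
qed

lemma iterate:
  assumes k: "m < \<delta>" and Uc: "2 * (\<delta> - m) \<le> card U"
  shows "r \<le> R \<Longrightarrow> \<exists>A. finite A \<and> A \<subseteq> \<Union>M \<and> inj_on emate A \<and> (\<forall>a\<in>A. Rob (emate ` A) (3*R - r) r a) \<and>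
     real (card (M - emate ` A)) \<le> ys (real m) (real (\<delta> - m)) (real (3*R - 1)) r"
proof (induction r)
  case 0
  have "\<forall>a\<in>{}. Rob (emate ` {}) (3*R - 0) 0 a" by simp
  thus ?case by (intro exI[of _ "{}"]) simp
next
  case (Suc r)
  then obtain A where A: "finite A" "A \<subseteq> \<Union>M" "inj_on emate A" "\<forall>a\<in>A. Rob (emate ` A) (3*R - r) r a"
     "real (card (M - emate ` A)) \<le> ys (real m) (real (\<delta> - m)) (real (3*R - 1)) r" by auto
  have T: "3 * r + 3 \<le> 3 * R" using Suc.prems by simp
  obtain A' where A': "finite A'" "A' \<subseteq> \<Union>M" "inj_on emate A'" "\<forall>a\<in>A'. Rob (emate ` A') (3*R - Suc r) (Suc r) a"
    "real (card (M - emate ` A')) \<le> real (card (M - emate ` A)) -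
        (real (\<delta> - m) - real (3*R - 1) * real (card (M - emate ` A)) / real (\<delta> - m))"
    using step[OF A(1,2,3,4) T k Uc] by blast
  have kp: "real (\<delta> - m) > 0" using k by simp
  have "real (card (M - emate ` A)) -
        (real (\<delta> - m) - real (3*R - 1) * real (card (M - emate ` A)) / real (\<delta> - m))
      \<le> ys (real m) (real (\<delta> - m)) (real (3*R - 1)) r -
        (real (\<delta> - m) - real (3*R - 1) * ys (real m) (real (\<delta> - m)) (real (3*R - 1)) r / real (\<delta> - m))"
    by (rule ys_mono[OF kp _ A(5)]) simp
  hence "real (card (M - emate ` A')) \<le> ys (real m) (real (\<delta> - m)) (real (3*R - 1)) (Suc r)"
    using A'(5) by simp
  thus ?case using A' by blast
qed

lemma contra:
  assumes k: "m < \<delta>" and Uc: "2 * (\<delta> - m) \<le> card U"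
    and neg: "ys (real m) (real (\<delta> - m)) (real (3*R - 1)) R < 0"
  shows False
proof -
  obtain A where "real (card (M - emate ` A)) \<le> ys (real m) (real (\<delta> - m)) (real (3*R - 1)) R"
    using iterate[OF k Uc, of R R] by blast
  thus False using neg by simp
qed

end

theorem mainTheorem2:
  fixes V :: "'a set" and E :: "'a set set" and c :: "'a set \<Rightarrow> 'c"
  assumes "simple_graph V E" and "V \<noteq> {}"
    and "proper_edge_coloring E c"
    and "card V \<ge> 2 * min_degree V E"
  shows "\<exists>M. matching E M \<and> rainbow c M \<and>
           real (card M) \<ge> real (min_degree V E) - 2 * real (min_degree V E) powr (2/3)"
proof -
  define \<delta> where "\<delta> = min_degree V E"
  have finV: "finite V" using assms(1) unfolding simple_graph_def by blast
  have edgesV: "\<And>e. e \<in> E \<Longrightarrow> e \<subseteq> V \<and> card e = 2" using assms(1) unfolding simple_graph_def by blast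
  have "E \<subseteq> Pow V" using edgesV by blast
  hence finE: "finite E" using finV by (meson finite_Pow_iff finite_subset)
  let ?MM = "{N. matching E N \<and> rainbow c N}"
  have sub: "?MM \<subseteq> Pow E" unfolding matching_def by blast
  have finMM: "finite ?MM" using finite_subset[OF sub] finE by simp
  have emp: "{} \<in> ?MM" unfolding matching_def rainbow_def by simp
  define mm where "mm = Max (card ` ?MM)"
  have "mm \<in> card ` ?MM" unfolding mm_def using finMM emp by (intro Max_in) auto
  then obtain M where M: "matching E M" "rainbow c M" "card M = mm" by blast
  have maxM: "card N \<le> card M" if N: "matching E N" "rainbow c N" for N
  proof -
    have "card N \<in> card ` ?MM" using N by blast
    hence "card N \<le> mm" unfolding mm_def using Max_ge[OF finite_imageI[OF finMM]] by blast
    thus ?thesis using M(3) by simp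
  qed
  have degV: "\<And>v. v \<in> V \<Longrightarrow> \<delta> \<le> degree E v"
    unfolding \<delta>_def min_degree_def using finV by (intro Min_le) auto
  interpret ctx V E c M \<delta>
    using finV edgesV assms(3) M(1,2) maxM degV by unfold_locales auto
  show ?thesis
  proof (cases "real (card M) \<ge> real \<delta> - 2 * real \<delta> powr (2/3)")
    case True thus ?thesis using M unfolding \<delta>_def by blast
  next
    case False
    have p0: "real \<delta> powr (2/3) \<ge> 0" by simp
    hence lt: "card M < \<delta>" using False by linarith
    define k where "k = \<delta> - card M"
    have dk: "real \<delta> = real (card M) + real k" unfolding k_def using lt by simp
    have kgt: "real k > 2 * real \<delta> powr (2/3)" using False dk by linarith
    have dpos: "real \<delta> > 0" using lt by simp
    have cube: "(2 * real \<delta> powr (2/3))^3 = 8 * (real \<delta>)^2"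
    proof -
      have "(real \<delta> powr (2/3))^3 = (real \<delta> powr (2/3)) powr (real (3::nat))"
        using dpos by (simp add: powr_realpow)
      also have "\<dots> = real \<delta> powr 2" by (simp add: powr_powr)
      also have "\<dots> = (real \<delta>)^2" using dpos by (simp add: powr_realpow[of _ 2, simplified])
      finally show ?thesis by (simp add: power_mult_distrib)
    qed
    have "(2 * real \<delta> powr (2/3))^3 < (real k)^3"
      by (rule power_strict_mono[OF kgt]) (use p0 in auto)
    hence k3: "(real k)^3 > 8 * (real (card M) + real k)^2" using cube dk by simp
    obtain R where R: "R \<ge> 1" "ys (real (card M)) (real k) (real (3*R - 1)) R < 0"
      using numeric[OF k3] by blast
    have Uc: "2 * (\<delta> - card M) \<le> card U"
      using cardU assms(4) unfolding \<delta>_def by simp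
    have False using contra[OF lt Uc] R(2) unfolding k_def by blast
    thus ?thesis ..
  qed
qed

end
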